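(* Let $\mu_1\in\mathcal C^1(\mathbb R_+)$ satisfy $\mu_1(0)=0$, $\lim_{s\to\infty}\mu_1(s)=m_1$ and $\mu_1'(s)>0$ for all $s>0$. Let $\alpha\in(0,1)$, $k_1>0$, $D_2>0$, $S_1^{\mathrm{in}}>0$, and let $X_1^{1*}>0$ satisfy $X_1^{1*}<S_1^{\mathrm{in}}/(\alpha k_1)$. Define $f_1(x)=\mu_1(S_1^{\mathrm{in}}-\alpha k_1x)$ for $x\in[0,S_1^{\mathrm{in}}/(\alpha k_1)]$ and $g_1(x)=\alpha D_2\,\frac{x-X_1^{1*}}{x}$ for $x>0$. Then the equation $f_1(x)=g_1(x)$ has a unique solution $X_1^{2*}$ in the interval $(X_1^{1*},S_1^{\mathrm{in}}/(\alpha k_1))$.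
   Context: In the paper, $X_1^{1*}=(S_1^{\mathrm{in}}-\lambda_1^1)/(\alpha k_1)$ is the first-bioreactor biomass component of an equilibrium with $S_1^{\mathrm{in}}>\lambda_1^1$, where $\lambda_1^1$ solves $\mu_1(S)=\alpha D_1$; in particular $X_1^{1*}>0$. *)

theory Defs
  imports "HOL-Analysis.Analysis"
begin

end

theory Submission
  imports Defs
begin

theorem lemma1:
  fixes \<mu>1 \<mu>1' :: "real \<Rightarrow> real"
    and m1 \<alpha> k1 D2 Sin X11 :: real
  assumes deriv: "\<And>s. s \<ge> 0 \<Longrightarrow> (\<mu>1 has_real_derivative \<mu>1' s) (at s within {0..})"
    and cont_deriv: "continuous_on {0..} \<mu>1'"
    and mu0: "\<mu>1 0 = 0"
    and lim: "(\<mu>1 \<longlongrightarrow> m1) at_top"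
    and pos_deriv: "\<And>s. s > 0 \<Longrightarrow> \<mu>1' s > 0"
    and alpha: "0 < \<alpha>" "\<alpha> < 1"
    and k1: "k1 > 0" and D2: "D2 > 0" and Sin: "Sin > 0"
    and X11: "X11 > 0" "X11 < Sin / (\<alpha> * k1)"
  shows "\<exists>!x. x \<in> {X11 <..< Sin / (\<alpha> * k1)} \<and>
           \<mu>1 (Sin - \<alpha> * k1 * x) = \<alpha> * D2 * (x - X11) / x"
proof -
  have cont: "continuous_on {0..} \<mu>1"
    unfolding continuous_on_eq_continuous_within
    using deriv DERIV_continuous by fastforce
  have dat: "(\<mu>1 has_real_derivative \<mu>1' x) (at x)" if "x > 0" for x
  proof -
    have "(\<mu>1 has_real_derivative \<mu>1' x) (at x within {0<..})"
      by (rule has_field_derivative_subset[OF deriv[of x]]) (use that in auto)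
    moreover have "at x within {0<..} = at x"
      by (rule at_within_open) (use that in auto)
    ultimately show ?thesis by simp
  qed
  have mono: "\<mu>1 a < \<mu>1 b" if "0 \<le> a" "a < b" for a b
  proof (rule DERIV_pos_imp_increasing_open[OF that(2)])
    fix x assume "a < x" "x < b"
    then have "x > 0" using that by linarith
    then show "\<exists>y. (\<mu>1 has_real_derivative y) (at x) \<and> 0 < y"
      using dat pos_deriv by blast
  next
    show "continuous_on {a..b} \<mu>1"
      by (rule continuous_on_subset[OF cont]) (use that in auto)
  qed
  define L where "L = Sin / (\<alpha> * k1)"
  have ak: "\<alpha> * k1 > 0" using alpha k1 by simp
  have Leq: "\<alpha> * k1 * L = Sin" unfolding L_def using alpha k1 by simp
  define h where "h x = \<mu>1 (Sin - \<alpha> * k1 * x) - \<alpha> * D2 * (x - X11) / x" for x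
  have X11L: "X11 < L" using X11 L_def by simp
  have argpos: "Sin - \<alpha> * k1 * x \<ge> 0" if "x \<le> L" for x
  proof -
    have "\<alpha> * k1 * x \<le> \<alpha> * k1 * L" using that ak by (intro mult_left_mono) auto
    then show ?thesis using Leq by simp
  qed
  have hdec: "h y < h x" if "X11 \<le> x" "x < y" "y \<le> L" for x y
  proof -
    have "\<mu>1 (Sin - \<alpha> * k1 * y) < \<mu>1 (Sin - \<alpha> * k1 * x)"
      using mono[OF argpos[OF that(3)], of "Sin - \<alpha> * k1 * x"] mult_strict_left_mono[OF that(2) ak] by linarith
    moreover have "\<alpha> * D2 * (x - X11) / x < \<alpha> * D2 * (y - X11) / y"
    proof -
      have xp: "x > 0" using that X11 by simp
      have yp: "y > 0" using xp that by linarith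
      have "X11 / y < X11 / x" using xp that X11 by (intro divide_strict_left_mono) auto
      then have "(x - X11) / x < (y - X11) / y"
        using xp yp by (simp add: diff_divide_distrib)
      moreover have "\<alpha> * D2 > 0" using alpha D2 by simp
      ultimately show ?thesis
        using mult_strict_left_mono by (simp only: times_divide_eq_right[symmetric]) blast
    qed
    ultimately show ?thesis unfolding h_def by simp
  qed
  have h1: "h X11 > 0"
  proof -
    have "\<mu>1 0 < \<mu>1 (Sin - \<alpha> * k1 * X11)"
      using mono[of 0 "Sin - \<alpha> * k1 * X11"] mult_strict_left_mono[OF X11L ak] Leq by linarith
    then show ?thesis using mu0 unfolding h_def by simp
  qed
  have h2: "h L < 0"
  proof -
    have "\<alpha> * D2 * (L - X11) / L > 0" using alpha D2 X11L X11 by simp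
    then show ?thesis unfolding h_def using Leq mu0 by simp
  qed
  have hcont: "continuous_on {X11..L} h"
  proof -
    have "continuous_on {X11..L} (\<lambda>x. \<mu>1 (Sin - \<alpha> * k1 * x))"
      by (rule continuous_on_compose2[OF cont]) (auto intro!: continuous_intros argpos)
    moreover have "continuous_on {X11..L} (\<lambda>x. \<alpha> * D2 * (x - X11) / x)"
      using X11 by (auto intro!: continuous_intros)
    ultimately show ?thesis unfolding h_def by (auto intro!: continuous_intros)
  qed
  obtain x where x: "x \<in> {X11..L}" "h x = 0"
    using IVT2'[of h L 0 X11] h1 h2 hcont X11L by auto
  have xin: "x \<in> {X11<..<L}" using x h1 h2 by (auto simp: le_less)
  show ?thesis
  proof (rule ex1I[of _ x])
    show "x \<in> {X11<..<Sin / (\<alpha> * k1)} \<and> \<mu>1 (Sin - \<alpha> * k1 * x) = \<alpha> * D2 * (x - X11) / x"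
      using xin x unfolding h_def L_def by simp
  next
    fix y assume y: "y \<in> {X11<..<Sin / (\<alpha> * k1)} \<and> \<mu>1 (Sin - \<alpha> * k1 * y) = \<alpha> * D2 * (y - X11) / y"
    then have "h y = 0" unfolding h_def by simp
    moreover have "y \<in> {X11<..<L}" using y L_def by simp
    ultimately show "y = x" using hdec[of x y] hdec[of y x] xin x
      by (cases "x < y"; cases "y < x") auto
  qed
qed

end
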